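(* Let $A$ be a unique factorization domain and $R$ a subring of $A$ whose group of units equals that of $A$. Consider: (i) $\operatorname{Irr}R\subset\operatorname{Irr}A$; (ii) $\operatorname{Sqf}R\subset\operatorname{Sqf}A$; (iii) $\operatorname{Irr}R\subset\operatorname{Sqf}A$. Then (i) implies (ii) and (ii) implies (iii).
   Context: For a commutative ring $R$, $\operatorname{Irr}R$ is the set of irreducible elements of $R$ and $\operatorname{Sqf}R$ the set of square-free elements, where $a\in R$ is square-free if it cannot be written as $a=b^2c$ with $b,c\in R$ and $b$ not a unit of $R$. *)

theory Defs
  imports "HOL-Computational_Algebra.Computational_Algebra"
begin

definition is_subring :: "'a::comm_ring_1 set \<Rightarrow> bool" where
  "is_subring R \<longleftrightarrow> 0 \<in> R \<and> 1 \<in> R \<and>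
     (\<forall>x\<in>R. \<forall>y\<in>R. x + y \<in> R \<and> x * y \<in> R) \<and> (\<forall>x\<in>R. - x \<in> R)"

definition units_in :: "'a::comm_ring_1 set \<Rightarrow> 'a set" where
  "units_in R = {x \<in> R. \<exists>y\<in>R. x * y = 1}"

definition Irr_in :: "'a::comm_ring_1 set \<Rightarrow> 'a set" where
  "Irr_in R = {p \<in> R. p \<noteq> 0 \<and> p \<notin> units_in R \<and>
      (\<forall>a\<in>R. \<forall>b\<in>R. p = a * b \<longrightarrow> a \<in> units_in R \<or> b \<in> units_in R)}"

definition Sqf_in :: "'a::comm_ring_1 set \<Rightarrow> 'a set" where
  "Sqf_in R = {a \<in> R. \<not> (\<exists>b\<in>R. \<exists>c\<in>R. a = b ^ 2 * c \<and> b \<notin> units_in R)}"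

end

theory Submission
  imports Defs
begin

lemma lemL:
  fixes R :: "'a::{factorial_semiring, idom} set"
  assumes sub: "is_subring R"
    and un: "units_in R = {x. is_unit x}"
  shows "c \<in> R \<Longrightarrow> c \<noteq> 0 \<Longrightarrow> prime p \<Longrightarrow> p dvd c \<Longrightarrow>
     \<exists>r\<in>Irr_in R. \<exists>c'\<in>R. c = r * c' \<and> p dvd r"
proof (induction "size (prime_factorization c)" arbitrary: c rule: less_induct)
  case less
  have one: "1 \<in> R" using sub by (simp add: is_subring_def)
  have mul: "\<And>x y. x \<in> R \<Longrightarrow> y \<in> R \<Longrightarrow> x * y \<in> R" using sub by (simp add: is_subring_def)
  have nu: "\<not> is_unit c" using less.prems(3,4) dvd_unit_imp_unit not_prime_unit by blast
  show ?case
  proof (cases "c \<in> Irr_in R")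
    case True
    have "c = c * 1" by simp
    then show ?thesis using True one less.prems(4) by blast
  next
    case False
    have cu: "c \<notin> units_in R" using un nu by simp
    have "\<exists>d\<in>R. \<exists>e\<in>R. c = d*e \<and> d \<notin> units_in R \<and> e \<notin> units_in R"
      using False less.prems(1,2) cu unfolding Irr_in_def by blast
    then obtain d e where de: "d \<in> R" "e \<in> R" "c = d * e" "d \<notin> units_in R" "e \<notin> units_in R"
      by blast
    have du: "\<not> is_unit d" "\<not> is_unit e" using de(4,5) un by simp_all
    have nz: "d \<noteq> 0" "e \<noteq> 0" using de(3) less.prems(2) by simp_all
    have pf: "prime_factorization c = prime_factorization d + prime_factorization e"
      using de(3) nz prime_factorization_mult by simp
    have "prime_factorization d \<noteq> {#}" "prime_factorization e \<noteq> {#}"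
      using nz du by (simp_all add: prime_factorization_empty_iff)
    hence sd: "size (prime_factorization d) > 0" "size (prime_factorization e) > 0"
      by (simp_all add: nonempty_has_size)
    have lt: "size (prime_factorization d) < size (prime_factorization c)"
       "size (prime_factorization e) < size (prime_factorization c)"
      using pf sd by simp_all
    have "p dvd d * e" using less.prems(4) de(3) by simp
    hence "p dvd d \<or> p dvd e" using less.prems(3) prime_dvd_mult_iff by blast
    then show ?thesis
    proof
      assume pd: "p dvd d"
      obtain r d' where r: "r \<in> Irr_in R" "d' \<in> R" "d = r * d'" "p dvd r"
        using less.hyps[OF lt(1) de(1) nz(1) less.prems(3) pd] by blast
      have "c = r * (d' * e)" using de(3) r(3) by (simp add: mult.assoc)
      moreover have "d' * e \<in> R" using mul r(2) de(2) by blast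
      ultimately show ?thesis using r(1,4) by blast
    next
      assume pd: "p dvd e"
      obtain r d' where r: "r \<in> Irr_in R" "d' \<in> R" "e = r * d'" "p dvd r"
        using less.hyps[OF lt(2) de(2) nz(2) less.prems(3) pd] by blast
      have "c = r * (d * d')" using de(3) r(3) by (simp add: ac_simps)
      moreover have "d * d' \<in> R" using mul r(2) de(1) by blast
      ultimately show ?thesis using r(1,4) by blast
    qed
  qed
qed

theorem lemma3p1:
  fixes R :: "'a::{factorial_semiring, idom} set"
  assumes "is_subring R"
    and "units_in R = {x. is_unit x}"
  shows "(Irr_in R \<subseteq> {a. irreducible a} \<longrightarrow> Sqf_in R \<subseteq> {a. squarefree a})
       \<and> (Sqf_in R \<subseteq> {a. squarefree a} \<longrightarrow> Irr_in R \<subseteq> {a. squarefree a})"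
proof (intro conjI impI)
  note sub = assms(1) and un = assms(2)
  have mul: "\<And>x y. x \<in> R \<Longrightarrow> y \<in> R \<Longrightarrow> x * y \<in> R" using sub by (simp add: is_subring_def)
  have unR: "\<And>x. is_unit x \<Longrightarrow> x \<in> R" using un unfolding units_in_def by blast
  show "Sqf_in R \<subseteq> {a. squarefree a}" if I: "Irr_in R \<subseteq> {a. irreducible a}"
    proof
      fix a assume aS: "a \<in> Sqf_in R"
      hence aR: "a \<in> R" and nsq: "\<And>b c. b \<in> R \<Longrightarrow> c \<in> R \<Longrightarrow> a = b^2 * c \<Longrightarrow> is_unit b"
        using un unfolding Sqf_in_def by auto
      have a0: "a \<noteq> 0"
      proof
        assume "a = 0"
        hence "is_unit (0::'a)" using nsq[of 0 0] sub by (simp add: is_subring_def)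
        thus False by simp
      qed
      have noprime: False if p: "prime p" "p^2 dvd a" for p
      proof -
        have "p dvd a" using p by (simp add: power2_eq_square dvd_mult_left)
        then obtain r c' where rc: "r \<in> Irr_in R" "c' \<in> R" "a = r * c'" "p dvd r"
          using lemL[OF sub un aR a0 p(1)] by auto
        have rirr: "irreducible r" using I rc by auto
        obtain u where u: "r = p * u" using rc by (auto elim: dvdE)
        have uu: "is_unit u" using irreducible_multD[of p u] rirr u p(1) by (auto simp: prime_def prime_elem_def)
        have c0: "c' \<noteq> 0" using a0 rc by auto
        have "p * p dvd p * (u * c')" using p rc u by (simp add: power2_eq_square mult.assoc)
        hence "p dvd u * c'" using p by (simp add: prime_def)
        hence "p dvd c'" using uu by (simp add: dvd_mult_unit_iff')
        then obtain r' c'' where rc': "r' \<in> Irr_in R" "c'' \<in> R" "c' = r' * c''" "p dvd r'"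
          using lemL[OF sub un rc(2) c0 p(1)] by auto
        have rirr': "irreducible r'" using I rc' by auto
        obtain u' where u': "r' = p * u'" using rc' by (auto elim: dvdE)
        have uu': "is_unit u'" using irreducible_multD[of p u'] rirr' u' p(1) by (auto simp: prime_def prime_elem_def)
        obtain w where w: "1 = u * w" using uu by (auto elim: dvdE)
        define v where "v = w * u'"
        have vu: "is_unit v" using uu uu' w unfolding v_def
          by (metis is_unit_mult_iff dvd_triv_right)
        have "r * v = p * (u * w) * u'" using u by (simp add: v_def ac_simps)
        hence "r' = r * v" using u' w by simp
        hence "a = r^2 * (v * c'')" using rc rc' by (simp add: power2_eq_square ac_simps)
        hence "is_unit r" using nsq[of r "v * c''"] rc rc' unR[OF vu] mul by (auto simp: Irr_in_def)
        thus False using rirr irreducible_not_unit by blast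
      qed
      show "a \<in> {a. squarefree a}"
      proof (simp, rule squarefreeI, rule ccontr)
        fix x assume x: "x^2 dvd a" "\<not> x dvd 1"
        have "x \<noteq> 0" using x a0 by auto
        then obtain p where "p dvd x" "prime p" using prime_divisor_exists x by blast
        hence "p^2 dvd x^2" by (simp add: dvd_power_same)
        hence "p^2 dvd a" using x(1) by (rule dvd_trans)
        thus False using noprime \<open>prime p\<close> by blast
      qed
    qed
  show "Irr_in R \<subseteq> {a. squarefree a}" if S: "Sqf_in R \<subseteq> {a. squarefree a}"
  proof -
    have "Irr_in R \<subseteq> Sqf_in R"
    proof
      fix p assume p: "p \<in> Irr_in R"
      have "is_unit b" if "b \<in> R" "c \<in> R" "p = b^2 * c" for b c
      proof -
        have "p = b * (b * c)" using that by (simp add: power2_eq_square ac_simps)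
        hence "is_unit b \<or> is_unit (b * c)" using p that mul un unfolding Irr_in_def by blast
        thus ?thesis using is_unit_mult_iff by blast
      qed
      thus "p \<in> Sqf_in R" using p un unfolding Sqf_in_def Irr_in_def by auto
    qed
    thus "Irr_in R \<subseteq> {a. squarefree a}" using S by (rule subset_trans)
  qed
qed

end
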